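(* Let $f_0(i)=i$ for all $i\ge1$. Then for every $m\ge1$ and $1\le k\le n$, $c_m(n,k)$ equals the number of words of length $n-1$ over the alphabet $\{0,1,\ldots,m+1\}$ having exactly $k-1$ letters equal to $m+1$ and avoiding $01$ (no letter $0$ is immediately followed by the letter $1$).
   Context: For $m\ge 1$, $f_m$ is the invert transform of $f_{m-1}$, i.e. $f_m(n)=f_{m-1}(n)+\sum_{i=1}^{n-1}f_{m-1}(i)f_m(n-i)$ for $n\ge1$. For $m\ge1$ the numbers $c_m(n,k)$, $0\le k\le n$, are defined by $c_m(0,0)=1$, $c_m(n,0)=0$ for $n\ge1$, and $c_m(n,k)=\sum_{i=1}^{n-k+1}f_{m-1}(i)\,c_m(n-i,k-1)$ for $1\le k\le n$. Words may be empty. *)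

theory Defs
  imports Main
begin

text \<open>Invert transform of a sequence g (indices n \<ge> 1; value at 0 is irrelevant, set to 0):
  h(n) = g(n) + sum_{i=1}^{n-1} g(i) h(n-i).\<close>
fun invert :: "(nat \<Rightarrow> nat) \<Rightarrow> nat \<Rightarrow> nat" where
  "invert g n = (if n = 0 then 0
     else g n + (\<Sum>i\<in>{1..n-1}. g i * invert g (n - i)))"

definition fseq :: "(nat \<Rightarrow> nat) \<Rightarrow> nat \<Rightarrow> nat \<Rightarrow> nat" where
  "fseq f0 m = (invert ^^ m) f0"

fun cnum :: "(nat \<Rightarrow> nat) \<Rightarrow> nat \<Rightarrow> nat \<Rightarrow> nat \<Rightarrow> nat" where
  "cnum f0 m n 0 = (if n = 0 then 1 else 0)"
| "cnum f0 m n (Suc k) = (\<Sum>i\<in>{1..n-k}. fseq f0 (m - 1) i * cnum f0 m (n - i) k)"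

definition avoids01 :: "nat list \<Rightarrow> bool" where
  "avoids01 w \<longleftrightarrow> (\<forall>j. Suc j < length w \<longrightarrow> \<not> (w ! j = 0 \<and> w ! Suc j = 1))"

end

theory Submission
  imports Defs "HOL-Computational_Algebra.Formal_Power_Series"
begin

unbundle fps_syntax

definition toF :: "(nat \<Rightarrow> nat) \<Rightarrow> int fps" where
  "toF g = Abs_fps (\<lambda>n. int (g n))"

lemma nth_D:
  fixes f :: "int fps"
  shows "(f * (1 - of_nat c * fps_X + fps_X^2)) $ n =
     f $ n - (if n < 1 then 0 else of_nat c * f $ (n - 1)) + (if n < 2 then 0 else f $ (n - 2))"
proof -
  have "f * (1 - of_nat c * fps_X + fps_X^2) = f - fps_const (of_nat c) * (f * fps_X^1) + f * fps_X^2"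
    by (simp add: algebra_simps fps_of_nat)
  then show ?thesis
    by (simp only: fps_add_nth fps_sub_nth fps_mult_left_const_nth fps_X_power_mult_right_nth) simp
qed

lemma invert_fps:
  assumes g0: "g 0 = 0"
  shows "toF (invert g) = toF g + toF g * toF (invert g)"
proof (rule fps_ext)
  fix n
  show "toF (invert g) $ n = (toF g + toF g * toF (invert g)) $ n"
  proof (cases "n = 0")
    case True
    then show ?thesis by (simp add: toF_def g0)
  next
    case False
    have h0: "invert g 0 = 0" by simp
    have "(toF g * toF (invert g)) $ n = (\<Sum>i=0..n. int (g i) * int (invert g (n - i)))"
      by (simp add: fps_mult_nth toF_def)
    also have "\<dots> = (\<Sum>i\<in>{1..n-1}. int (g i) * int (invert g (n - i)))"
    proof (rule sum.mono_neutral_right)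
      show "\<forall>i\<in>{0..n} - {1..n - 1}. int (g i) * int (invert g (n - i)) = 0"
      proof
        fix i assume "i \<in> {0..n} - {1..n - 1}"
        then have "i = 0 \<or> i = n" using False by auto
        then show "int (g i) * int (invert g (n - i)) = 0" using g0 h0 by (auto simp del: invert.simps)
      qed
    qed auto
    finally have "(toF g * toF (invert g)) $ n = int (\<Sum>i\<in>{1..n-1}. g i * invert g (n - i))"
      by simp
    moreover have "invert g n = g n + (\<Sum>i\<in>{1..n-1}. g i * invert g (n - i))"
      using False by (subst invert.simps) simp
    ultimately show ?thesis by (simp add: toF_def del: invert.simps)
  qed
qed

lemma fseq_Suc: "fseq f0 (Suc j) = invert (fseq f0 j)"
  by (simp add: fseq_def)

lemma fseq_0: "fseq (\<lambda>i. i) j 0 = 0"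
  by (cases j) (simp_all add: fseq_def)

lemma base_fps: "toF (\<lambda>i. i) * (1 - of_nat 2 * fps_X + fps_X^2) = fps_X"
proof (rule fps_ext)
  fix n
  show "(toF (\<lambda>i. i) * (1 - of_nat 2 * fps_X + fps_X^2)) $ n = fps_X $ n"
    unfolding nth_D by (auto simp: toF_def fps_X_nth)
qed

lemma fseq_fps: "toF (fseq (\<lambda>i. i) j) * (1 - of_nat (j+2) * fps_X + fps_X^2) = fps_X"
proof (induction j)
  case 0
  then show ?case using base_fps by (simp add: fseq_def)
next
  case (Suc j)
  let ?G = "toF (fseq (\<lambda>i. i) j)" and ?H = "toF (fseq (\<lambda>i. i) (Suc j))"
  let ?D = "1 - of_nat (j+2) * fps_X + fps_X^2 :: int fps"
  have HG: "?H = ?G + ?G * ?H"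
    unfolding fseq_Suc by (rule invert_fps) (rule fseq_0)
  have "?H * (?D - fps_X) = ?H * ?D - ?H * (?G * ?D)" using Suc by (simp add: algebra_simps)
  also have "\<dots> = (?H - ?G * ?H) * ?D" by (simp add: algebra_simps)
  also have "?H - ?G * ?H = ?G" using HG by (simp add: algebra_simps)
  finally have "?H * (?D - fps_X) = fps_X" using Suc by simp
  moreover have "?D - fps_X = 1 - of_nat (Suc j+2) * fps_X + fps_X^2"
    by (simp add: algebra_simps)
  ultimately show ?case by metis
qed

lemma fseq_rec:
  "int (fseq (\<lambda>i. i) j (n+2)) + int (fseq (\<lambda>i. i) j n) = int (j+2) * int (fseq (\<lambda>i. i) j (n+1))"
  "fseq (\<lambda>i. i) j 1 = 1"
proof -
  have "(toF (fseq (\<lambda>i. i) j) * (1 - of_nat (j+2) * fps_X + fps_X^2)) $ (n+2) = fps_X $ (n+2)"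
    by (simp only: fseq_fps)
  then show "int (fseq (\<lambda>i. i) j (n+2)) + int (fseq (\<lambda>i. i) j n) = int (j+2) * int (fseq (\<lambda>i. i) j (n+1))"
    unfolding nth_D by (simp add: toF_def fps_X_nth)
  have "(toF (fseq (\<lambda>i. i) j) * (1 - of_nat (j+2) * fps_X + fps_X^2)) $ 1 = fps_X $ 1"
    by (simp only: fseq_fps)
  then show "fseq (\<lambda>i. i) j 1 = 1"
    unfolding nth_D by (simp add: toF_def fps_X_nth fseq_0)
qed

fun av :: "nat list \<Rightarrow> bool" where
  "av [] = True"
| "av [x] = True"
| "av (x # y # r) = (\<not> (x = 0 \<and> y = 1) \<and> av (y # r))"

lemma avoids01_Cons: "avoids01 (x # w) = ((w \<noteq> [] \<longrightarrow> \<not> (x = 0 \<and> hd w = 1)) \<and> avoids01 w)"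
proof
  assume H: "avoids01 (x # w)"
  have "w \<noteq> [] \<longrightarrow> \<not> (x = 0 \<and> hd w = 1)"
    using H[unfolded avoids01_def, rule_format, of 0] by (cases w) auto
  moreover have "avoids01 w" unfolding avoids01_def
  proof (intro allI impI)
    fix j assume "Suc j < length w"
    then show "\<not> (w ! j = 0 \<and> w ! Suc j = 1)"
      using H[unfolded avoids01_def, rule_format, of "Suc j"] by simp
  qed
  ultimately show "(w \<noteq> [] \<longrightarrow> \<not> (x = 0 \<and> hd w = 1)) \<and> avoids01 w" by blast
next
  assume H: "(w \<noteq> [] \<longrightarrow> \<not> (x = 0 \<and> hd w = 1)) \<and> avoids01 w"
  show "avoids01 (x # w)" unfolding avoids01_def
  proof (intro allI impI)
    fix j assume j: "Suc j < length (x # w)"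
    show "\<not> ((x # w) ! j = 0 \<and> (x # w) ! Suc j = 1)"
    proof (cases j)
      case 0 then show ?thesis using H j by (cases w) auto
    next
      case (Suc i) then show ?thesis using H[THEN conjunct2, unfolded avoids01_def, rule_format, of i] j by simp
    qed
  qed
qed

lemma avoids01_av: "avoids01 w = av w"
  by (induction w rule: av.induct) (auto simp: avoids01_Cons, auto simp: avoids01_def)

lemma av_Cons_ne0: "c \<noteq> 0 \<Longrightarrow> av (c # v) = av v"
  by (cases v) auto

lemma av_snoc_ne1: "c \<noteq> 1 \<Longrightarrow> av (u @ [c]) = av u"
  by (induction u rule: av.induct) auto

lemma av_split: "av (xs @ c # ys) = (av (xs @ [c]) \<and> av (c # ys))"
  by (induction xs rule: av.induct) auto

lemma av_mid: "c \<noteq> 0 \<Longrightarrow> c \<noteq> 1 \<Longrightarrow> av (u @ c # v) = (av u \<and> av v)"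
  using av_split av_Cons_ne0 av_snoc_ne1 by metis

lemma app_first_eq:
  "c \<notin> set u \<Longrightarrow> c \<notin> set u' \<Longrightarrow> u @ c # v = u' @ c # v' \<Longrightarrow> u = u' \<and> v = v'"
proof (induction u arbitrary: u')
  case Nil then show ?case by (cases u') auto
next
  case (Cons a u) then show ?case by (cases u') auto
qed

definition Aset :: "nat \<Rightarrow> nat \<Rightarrow> nat list set" where
  "Aset m l = {w. length w = l \<and> set w \<subseteq> {0..m} \<and> av w}"

definition Sset :: "nat \<Rightarrow> nat \<Rightarrow> nat \<Rightarrow> nat list set" where
  "Sset m L j = {w. length w = L \<and> set w \<subseteq> {0..m+1} \<and> length (filter (\<lambda>x. x = m + 1) w) = j \<and> av w}"

lemma finite_Aset: "finite (Aset m l)"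
  by (rule finite_subset[OF _ finite_lists_length_eq[of "{0..m}" l]]) (auto simp: Aset_def)

lemma finite_Sset: "finite (Sset m L j)"
  by (rule finite_subset[OF _ finite_lists_length_eq[of "{0..m+1}" L]]) (auto simp: Sset_def)

lemma S0: "Sset m L 0 = Aset m L"
  unfolding Sset_def Aset_def filter_empty_conv subset_iff by (auto simp: le_Suc_eq filter_empty_conv)

lemma Sbig: assumes "L < j" shows "Sset m L j = {}"
  proof -
  have "j \<le> L" if "w \<in> Sset m L j" for w
    using that length_filter_le[of "\<lambda>x. x = m + 1" w] unfolding Sset_def by simp
  then show ?thesis using \<open>L < j\<close> by fastforce
qed

lemma A0: "card (Aset m 0) = 1"
proof -
  have "Aset m 0 = {[]}" by (auto simp: Aset_def)
  then show ?thesis by simp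
qed

lemma A1: "card (Aset m 1) = m + 1"
proof -
  have "Aset m 1 = (\<lambda>x. [x]) ` {0..m}" by (auto simp: Aset_def length_Suc_conv)
  then show ?thesis by (simp add: card_image inj_on_def)
qed

lemma A_rec:
  assumes m: "m \<ge> 1"
  shows "card (Aset m (l+2)) + card (Aset m l) = (m+1) * card (Aset m (l+1))"
proof -
  let ?T = "(\<lambda>(x, w). x # w) ` ({0..m} \<times> Aset m (l+1))"
  let ?P = "(\<lambda>v. 0 # 1 # v) ` Aset m l"
  have cT: "card ?T = (m+1) * card (Aset m (l+1))"
    by (subst card_image) (auto simp: inj_on_def card_cartesian_product)
  have cP: "card ?P = card (Aset m l)"
    by (subst card_image) (auto simp: inj_on_def)
  have TU: "?T = Aset m (l+2) \<union> ?P"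
  proof (intro equalityI subsetI)
    fix z assume "z \<in> ?T"
    then obtain x w where z: "z = x # w" and x: "x \<in> {0..m}" and w: "w \<in> Aset m (l+1)" by auto
    show "z \<in> Aset m (l+2) \<union> ?P"
    proof (cases "x = 0 \<and> hd w = 1")
      case True
      then obtain v where v: "w = 1 # v" using w by (cases w) (auto simp: Aset_def)
      then have "v \<in> Aset m l" using w by (auto simp: Aset_def av_Cons_ne0)
      then show ?thesis using z v True by auto
    next
      case False
      then have "av z" using w z by (cases w) (auto simp: Aset_def)
      then show ?thesis using z x w by (auto simp: Aset_def)
    qed
  next
    fix z assume "z \<in> Aset m (l+2) \<union> ?P"
    then show "z \<in> ?T"
    proof
      assume "z \<in> Aset m (l+2)"
      then obtain x w where z: "z = x # w" by (cases z) (auto simp: Aset_def)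
      then have "x \<in> {0..m}" "w \<in> Aset m (l+1)" using \<open>z \<in> Aset m (l+2)\<close>
        by (auto simp: Aset_def, cases w, auto)
      then show ?thesis using z by auto
    next
      assume "z \<in> ?P"
      then obtain v where z: "z = 0 # 1 # v" and v: "v \<in> Aset m l" by auto
      have "1 # v \<in> Aset m (l+1)" using v m by (auto simp: Aset_def av_Cons_ne0)
      then show ?thesis using z by force
    qed
  qed
  have nav: "\<not> av (0 # 1 # v)" for v by simp
  have disj: "Aset m (l+2) \<inter> ?P = {}" using nav unfolding Aset_def by blast
  have "card ?T = card (Aset m (l+2)) + card ?P"
    unfolding TU by (rule card_Un_disjoint[OF finite_Aset _ disj]) (simp add: finite_Aset)
  then show ?thesis using cT cP by simp
qed

lemma S_suc:
  assumes m: "m \<ge> 1"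
  shows "card (Sset m L (Suc j)) = (\<Sum>l<L. card (Aset m l) * card (Sset m (L - 1 - l) j))"
proof -
  let ?c = "m + 1"
  define F where "F l = (\<lambda>(u, v). u @ ?c # v) ` (Aset m l \<times> Sset m (L - 1 - l) j)" for l
  have noc: "?c \<notin> set u" if "u \<in> Aset m l" for u l using that by (auto simp: Aset_def)
  have injF: "inj_on (\<lambda>(u, v). u @ ?c # v) (Aset m l \<times> Sset m (L - 1 - l) j)" for l
  proof (rule inj_onI, clarify)
    fix u v u' v' assume "u \<in> Aset m l" "u' \<in> Aset m l" "u @ ?c # v = u' @ ?c # v'"
    then show "u = u' \<and> v = v'" using app_first_eq[OF noc noc] by blast
  qed
  have cF: "card (F l) = card (Aset m l) * card (Sset m (L - 1 - l) j)" for l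
    unfolding F_def by (subst card_image[OF injF]) (simp add: card_cartesian_product)
  have eq: "Sset m L (Suc j) = (\<Union>l<L. F l)"
  proof (intro equalityI subsetI)
    fix w assume w: "w \<in> Sset m L (Suc j)"
    then have "filter (\<lambda>x. x = ?c) w \<noteq> []" unfolding Sset_def by auto
    then have "?c \<in> set w" by (metis (mono_tags, lifting) filter_False)
    then obtain u v where wuv: "w = u @ ?c # v" and cu: "?c \<notin> set u" using split_list_first by metis
    have lu: "length u < L" using w wuv by (auto simp: Sset_def)
    have avm: "av w = (av u \<and> av v)" unfolding wuv using m by (intro av_mid) auto
    have fu: "filter (\<lambda>x. x = ?c) u = []" using cu by (simp add: filter_empty_conv) blast
    have "set u \<subseteq> {0..m+1}" using w wuv by (auto simp: Sset_def)
    then have "set u \<subseteq> {0..m}" using cu by (auto simp: subset_iff) (metis le_Suc_eq)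
    then have uA: "u \<in> Aset m (length u)" using w avm by (auto simp: Aset_def Sset_def)
    have "v \<in> Sset m (L - 1 - length u) j" using w avm fu unfolding wuv Sset_def by auto
    then have "w \<in> F (length u)" unfolding F_def wuv using uA by (intro image_eqI[where x="(u,v)"]) auto
    then show "w \<in> (\<Union>l<L. F l)" using lu by blast
  next
    fix w assume "w \<in> (\<Union>l<L. F l)"
    then obtain l u v where l: "l < L" and u: "u \<in> Aset m l" and v: "v \<in> Sset m (L - 1 - l) j"
      and w: "w = u @ ?c # v" by (auto simp: F_def)
    have fu: "filter (\<lambda>x. x = ?c) u = []" using noc[OF u] by (simp add: filter_empty_conv) blast
    have avm: "av w = (av u \<and> av v)" unfolding w using m by (intro av_mid) auto
    have su: "set u \<subseteq> {0..m+1}" using u by (auto simp: Aset_def)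
    show "w \<in> Sset m L (Suc j)" using l u v w fu avm su unfolding Sset_def Aset_def by auto
  qed
  have disj: "F l \<inter> F l' = {}" if "l \<noteq> l'" for l l'
  proof (rule ccontr)
    assume "F l \<inter> F l' \<noteq> {}"
    then obtain w where w1: "w \<in> F l" and w2: "w \<in> F l'" by blast
    from w1 obtain u v where u: "u \<in> Aset m l" and e1: "w = u @ ?c # v" unfolding F_def by force
    from w2 obtain u' v' where u': "u' \<in> Aset m l'" and e2: "w = u' @ ?c # v'" unfolding F_def by force
    have e: "u @ ?c # v = u' @ ?c # v'" using e1 e2 by simp
    have "u = u'" using app_first_eq[OF noc[OF u] noc[OF u'] e] by blast
    moreover have "length u = l" "length u' = l'" using u u' by (simp_all add: Aset_def)
    ultimately show False using that by simp
  qed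
  have "card (Sset m L (Suc j)) = (\<Sum>l<L. card (F l))"
    unfolding eq
  proof (rule card_UN_disjoint)
    show "\<forall>i\<in>{..<L}. finite (F i)" by (simp add: F_def finite_Aset finite_Sset)
    show "\<forall>i\<in>{..<L}. \<forall>j\<in>{..<L}. i \<noteq> j \<longrightarrow> F i \<inter> F j = {}" using disj by blast
  qed simp
  then show ?thesis by (simp add: cF)
qed


lemma g_A:
  assumes m: "m \<ge> 1"
  shows "fseq (\<lambda>i. i) (m - 1) (Suc l) = card (Aset m l)"
proof -
  let ?g = "fseq (\<lambda>i. i) (m - 1)"
  have mm: "m - 1 + 2 = m + 1" using m by simp
  have rec: "int (?g (n+2)) + int (?g n) = int (m+1) * int (?g (n+1))" for n
    using fseq_rec(1)[of "m-1" n] mm by simp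
  have g1: "?g 1 = 1" by (rule fseq_rec(2))
  have g2: "?g 2 = m + 1" using rec[of 0] g1 fseq_0[of "m-1"] by (simp add: numeral_2_eq_2)
  have "?g (Suc l) = card (Aset m l) \<and> ?g (Suc (Suc l)) = card (Aset m (Suc l))"
  proof (induction l)
    case 0 then show ?case using g1 g2 A0[of m] A1[of m] by (simp add: numeral_2_eq_2)
  next
    case (Suc l)
    have "int (?g (l+3)) + int (?g (l+1)) = int (m+1) * int (?g (l+2))"
      using rec[of "l+1"] by (simp add: numeral_3_eq_3 numeral_2_eq_2)
    moreover have "int (card (Aset m (l+2))) + int (card (Aset m l)) = int (m+1) * int (card (Aset m (l+1)))"
      using A_rec[OF m, of l] by (metis of_nat_add of_nat_mult)
    ultimately have "?g (l+3) = card (Aset m (l+2))" using Suc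
      by (simp add: numeral_3_eq_3 numeral_2_eq_2)
    then show ?case using Suc by (simp add: numeral_3_eq_3 numeral_2_eq_2)
  qed
  then show ?thesis by blast
qed

lemma main_rec:
  assumes m: "m \<ge> 1"
  shows "Suc k \<le> n \<Longrightarrow> cnum (\<lambda>i. i) m n (Suc k) = card (Sset m (n - 1) k)"
proof (induction k arbitrary: n)
  case 0
  let ?g = "fseq (\<lambda>i. i) (m - 1)"
  have "cnum (\<lambda>i. i) m n (Suc 0) = (\<Sum>i\<in>{1..n}. ?g i * (if n - i = 0 then 1 else 0))"
    by simp
  also have "\<dots> = (\<Sum>i\<in>{1..n}. (if i = n then ?g n else 0))"
    by (rule sum.cong) auto
  also have "\<dots> = ?g n" using 0 by simp
  also have "\<dots> = card (Aset m (n - 1))" using g_A[OF m, of "n-1"] 0 by simp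
  finally show ?case by (simp add: S0)
next
  case (Suc k)
  let ?g = "fseq (\<lambda>i. i) (m - 1)"
  let ?a = "\<lambda>l. card (Aset m l)" and ?N = "\<lambda>L. card (Sset m L k)"
  have "cnum (\<lambda>i. i) m n (Suc (Suc k)) = (\<Sum>i\<in>{1..n - Suc k}. ?g i * cnum (\<lambda>i. i) m (n - i) (Suc k))"
    by simp
  also have "\<dots> = (\<Sum>i\<in>{1..n - Suc k}. ?a (i - 1) * ?N (n - i - 1))"
  proof (rule sum.cong)
    fix i assume i: "i \<in> {1..n - Suc k}"
    then have "Suc k \<le> n - i" by auto
    then have "cnum (\<lambda>i. i) m (n - i) (Suc k) = ?N (n - i - 1)" by (rule Suc.IH)
    moreover have "?g i = ?a (i - 1)" using g_A[OF m, of "i - 1"] i by simp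
    ultimately show "?g i * cnum (\<lambda>i. i) m (n - i) (Suc k) = ?a (i - 1) * ?N (n - i - 1)" by simp
  qed simp
  also have "\<dots> = (\<Sum>l<n - Suc k. ?a l * ?N (n - 1 - 1 - l))"
    unfolding One_nat_def sum.atLeast1_atMost_eq by (simp add: diff_diff_add)
  also have "\<dots> = (\<Sum>l<n - 1. ?a l * ?N (n - 1 - 1 - l))"
  proof (rule sum.mono_neutral_left)
    show "\<forall>i\<in>{..<n - 1} - {..<n - Suc k}. ?a i * ?N (n - 1 - 1 - i) = 0"
    proof
      fix i assume "i \<in> {..<n - 1} - {..<n - Suc k}"
      then have "n - 1 - 1 - i < k" using Suc.prems by auto
      then show "?a i * ?N (n - 1 - 1 - i) = 0" using Sbig by simp
    qed
  qed auto
  also have "\<dots> = card (Sset m (n - 1) (Suc k))"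
    using S_suc[OF m, of "n - 1" k] by simp
  finally show ?case .
qed

theorem corollary25:
  fixes m n k :: nat
  assumes "m \<ge> 1" and "1 \<le> k" and "k \<le> n"
  shows "cnum (\<lambda>i. i) m n k =
    card {w :: nat list. length w = n - 1 \<and> set w \<subseteq> {0..m+1}
            \<and> length (filter (\<lambda>x. x = m + 1) w) = k - 1 \<and> avoids01 w}"
proof -
  obtain k' where k: "k = Suc k'" using assms(2) by (cases k) auto
  have "cnum (\<lambda>i. i) m n k = card (Sset m (n - 1) k')"
    using main_rec[OF assms(1)] assms(3) k by simp
  also have "Sset m (n - 1) k' = {w :: nat list. length w = n - 1 \<and> set w \<subseteq> {0..m+1}
            \<and> length (filter (\<lambda>x. x = m + 1) w) = k - 1 \<and> avoids01 w}"
    unfolding Sset_def avoids01_av k by simp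
  finally show ?thesis .
qed

end
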